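(* Let $A \in \mathbb{R}^{m \times r}$, let $C = \{ x \in \mathbb{R}^r \mid Ax \ge 0\}$, and let $\tilde C = \{ (x, Ax) \in \mathbb{R}^{r+m} \mid Ax \ge 0\}$. Then for every nonzero $x \in C$: $x$ is conformally non-decomposable in $C$ if and only if $(x, Ax)$ is conformally non-decomposable in $\tilde C$.
   Context: For $x \in \mathbb{R}^n$, $\operatorname{sign}(x) \in \{-,0,+\}^n$ is obtained by applying the sign function componentwise; the relations $0<-$, $0<+$ induce a componentwise partial order on $\{-,0,+\}^n$ ($-$ and $+$ incomparable). For a convex cone $K$, a nonzero $x \in K$ is conformally non-decomposable in $K$ if for all nonzero $x^1,x^2 \in K$ with $\operatorname{sign}(x^1),\operatorname{sign}(x^2) \le \operatorname{sign}(x)$, $x = x^1 + x^2$ implies $x^1 = \lambda x^2$ for some $\lambda > 0$. *)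

theory Defs
  imports "HOL-Analysis.Analysis"
begin

datatype sgn3 = Neg | Zero | Pos

definition sgn3_of :: "real \<Rightarrow> sgn3" where
  "sgn3_of t = (if t < 0 then Neg else if t = 0 then Zero else Pos)"

definition sign_vec :: "real ^ 'n \<Rightarrow> 'n \<Rightarrow> sgn3" where
  "sign_vec x = (\<lambda>i. sgn3_of (x $ i))"

definition sign_le :: "('n \<Rightarrow> sgn3) \<Rightarrow> ('n \<Rightarrow> sgn3) \<Rightarrow> bool" where
  "sign_le s t \<longleftrightarrow> (\<forall>i. s i = Zero \<or> s i = t i)"

definition conf_nondecomp :: "(real ^ 'n) set \<Rightarrow> real ^ 'n \<Rightarrow> bool" where
  "conf_nondecomp K x \<longleftrightarrow> x \<in> K \<and> x \<noteq> 0 \<and>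
     (\<forall>x1 x2. x1 \<in> K \<longrightarrow> x2 \<in> K \<longrightarrow> x1 \<noteq> 0 \<longrightarrow> x2 \<noteq> 0 \<longrightarrow>
        sign_le (sign_vec x1) (sign_vec x) \<longrightarrow> sign_le (sign_vec x2) (sign_vec x) \<longrightarrow>
        x = x1 + x2 \<longrightarrow> (\<exists>c>0. x1 = c *\<^sub>R x2))"

definition coneC :: "real ^ 'r ^ 'm \<Rightarrow> (real ^ 'r) set" where
  "coneC A = {x. \<forall>i. (A *v x) $ i \<ge> 0}"

definition lift :: "real ^ 'r ^ 'm \<Rightarrow> real ^ 'r \<Rightarrow> real ^ ('r + 'm)" where
  "lift A x = (\<chi> i. case i of Inl j \<Rightarrow> x $ j | Inr k \<Rightarrow> (A *v x) $ k)"

definition coneCt :: "real ^ 'r ^ 'm \<Rightarrow> (real ^ ('r + 'm)) set" where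
  "coneCt A = {lift A x | x. \<forall>i. (A *v x) $ i \<ge> 0}"

end

theory Submission
  imports Defs
begin

lemma lift_add: "lift A (a + b) = lift A a + lift A b"
  by (auto simp: lift_def vec_eq_iff matrix_vector_right_distrib split: sum.split)

lemma lift_scale: "lift A (c *\<^sub>R a) = c *\<^sub>R lift A a"
  by (auto simp: lift_def vec_eq_iff matrix_vector_mult_scaleR split: sum.split)

lemma lift_inl: "lift A a $ Inl j = a $ j"
  by (simp add: lift_def)

lemma lift_inr: "lift A a $ Inr k = (A *v a) $ k"
  by (simp add: lift_def)

lemma lift_inj: "lift A a = lift A b \<Longrightarrow> a = b"
  by (metis lift_inl vec_eq_iff)

lemma lift_zero_iff: "lift A a = 0 \<longleftrightarrow> a = 0"
proof
  assume "lift A a = 0"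
  then have "lift A a = lift A 0" by (simp add: lift_def vec_eq_iff split: sum.split)
  then show "a = 0" by (rule lift_inj)
next
  assume "a = 0"
  then have "A *v a = 0" by simp
  show "lift A a = 0"
  proof (rule iffD2[OF vec_eq_iff], rule allI)
    fix i :: "'a + 'b"
    show "lift A a $ i = 0 $ i"
      using \<open>A *v a = 0\<close> \<open>a = 0\<close> by (cases i) (simp_all only: lift_inl lift_inr zero_index)
  qed
qed

lemma coneCt_iff: "y \<in> coneCt A \<longleftrightarrow> (\<exists>a. y = lift A a \<and> a \<in> coneC A)"
  by (auto simp: coneCt_def coneC_def)

lemma sign_le_lift_inl:
  "sign_le (sign_vec (lift A a)) (sign_vec (lift A b)) \<Longrightarrow> sign_le (sign_vec a) (sign_vec b)"
  unfolding sign_le_def sign_vec_def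
  by (metis lift_inl)

lemma sign_le_lift_intro:
  assumes "sign_le (sign_vec a) (sign_vec b)" "a \<in> coneC A" "c \<in> coneC A" "b = a + c"
  shows "sign_le (sign_vec (lift A a)) (sign_vec (lift A b))"
  unfolding sign_le_def
proof
  fix i :: "'a + 'b"
  show "sign_vec (lift A a) i = Zero \<or> sign_vec (lift A a) i = sign_vec (lift A b) i"
  proof (cases i)
    case (Inl j)
    then show ?thesis using assms(1) by (simp add: sign_le_def sign_vec_def lift_inl)
  next
    case (Inr k)
    have h1: "(A *v a) $ k \<ge> 0" "(A *v c) $ k \<ge> 0" using assms(2,3) by (auto simp: coneC_def)
    have h2: "(A *v b) $ k = (A *v a) $ k + (A *v c) $ k"
      using assms(4) by (simp add: matrix_vector_right_distrib)
    show ?thesis using Inr h1 h2 by (simp add: sign_vec_def lift_inr sgn3_of_def)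
  qed
qed

theorem lemma2:
  fixes A :: "real ^ 'r ^ 'm" and x :: "real ^ 'r"
  assumes "x \<in> coneC A" and "x \<noteq> 0"
  shows "conf_nondecomp (coneC A) x \<longleftrightarrow> conf_nondecomp (coneCt A) (lift A x)"
proof
  assume H: "conf_nondecomp (coneC A) x"
  show "conf_nondecomp (coneCt A) (lift A x)"
    unfolding conf_nondecomp_def
  proof (intro conjI allI impI)
    show "lift A x \<in> coneCt A" using assms(1) coneCt_iff by blast
    show "lift A x \<noteq> 0" using assms(2) lift_zero_iff by blast
    fix y1 y2
    assume a: "y1 \<in> coneCt A" "y2 \<in> coneCt A" "y1 \<noteq> 0" "y2 \<noteq> 0"
      "sign_le (sign_vec y1) (sign_vec (lift A x))" "sign_le (sign_vec y2) (sign_vec (lift A x))"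
      "lift A x = y1 + y2"
    obtain x1 where x1: "y1 = lift A x1" "x1 \<in> coneC A" using a(1) coneCt_iff by blast
    obtain x2 where x2: "y2 = lift A x2" "x2 \<in> coneC A" using a(2) coneCt_iff by blast
    have "x = x1 + x2" using a(7) x1 x2 lift_add lift_inj by metis
    moreover have "x1 \<noteq> 0" "x2 \<noteq> 0" using a(3,4) x1 x2 lift_zero_iff by blast+
    moreover have "sign_le (sign_vec x1) (sign_vec x)" "sign_le (sign_vec x2) (sign_vec x)"
      using a(5,6) x1 x2 sign_le_lift_inl by blast+
    ultimately obtain c where "c > 0" "x1 = c *\<^sub>R x2"
      using H x1 x2 unfolding conf_nondecomp_def by blast
    then show "\<exists>c>0. y1 = c *\<^sub>R y2" using x1 x2 lift_scale by metis
  qed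
next
  assume H: "conf_nondecomp (coneCt A) (lift A x)"
  show "conf_nondecomp (coneC A) x"
    unfolding conf_nondecomp_def
  proof (intro conjI allI impI)
    show "x \<in> coneC A" "x \<noteq> 0" using assms by auto
    fix x1 x2
    assume a: "x1 \<in> coneC A" "x2 \<in> coneC A" "x1 \<noteq> 0" "x2 \<noteq> 0"
      "sign_le (sign_vec x1) (sign_vec x)" "sign_le (sign_vec x2) (sign_vec x)"
      "x = x1 + x2"
    have s1: "sign_le (sign_vec (lift A x1)) (sign_vec (lift A x))"
      using sign_le_lift_intro[OF a(5) a(1) a(2) a(7)] .
    have s2: "sign_le (sign_vec (lift A x2)) (sign_vec (lift A x))"
      using sign_le_lift_intro[OF a(6) a(2) a(1)] a(7) by (simp add: add.commute)
    have "lift A x1 \<in> coneCt A" "lift A x2 \<in> coneCt A" using a(1,2) coneCt_iff by blast+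
    moreover have "lift A x1 \<noteq> 0" "lift A x2 \<noteq> 0" using a(3,4) lift_zero_iff by blast+
    moreover have "lift A x = lift A x1 + lift A x2" using a(7) lift_add by metis
    ultimately obtain c where "c > 0" "lift A x1 = c *\<^sub>R lift A x2"
      using H s1 s2 unfolding conf_nondecomp_def by blast
    then show "\<exists>c>0. x1 = c *\<^sub>R x2" using lift_scale lift_inj by metis
  qed
qed

end
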